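(* In the first-method model ($F\subset\mathbb R^d$ satisfying (A1)–(A3), $\beta=(\beta_0,\dots,\beta_d,s)^\top$ with $\beta_k=\log|\mathcal C_k(F)|$, observations $y_{kj}=\beta_k+sx_j+\delta_{kj}$, $k=0,\dots,d$, $x_j=-\log\varepsilon_j$ for strictly decreasing radii $\varepsilon_j>0$), let $X_n\in\mathbb R^{n(d+1)\times(d+2)}$ be the design matrix whose row corresponding to $(j,k)$ is $(e_k^\top, x_j)$ with $e_k\in\mathbb R^{d+1}$ the $k$-th unit vector, and let $\hat\beta^{(n)}=(X_n^\top X_n)^{-1}X_n^\top y^{(n)}$ be the least squares estimator. Assume the error vector is $\delta^{(n)}=\sigma\gamma^{(n)}$ with $\sigma>0$ and $\gamma^{(n)}$ having i.i.d. coordinates (common distribution) of mean $0$ and variance $1$, so $Q_n=\sigma^2I$. Suppose there are constants $\gamma,\mu\ge0$ with $\max\{\mu,2\mu-\gamma\}<1$ such that $\widetilde S_n^2=\Theta(n^\gamma)$ and $x_n=O(n^{\mu/2})$ as $n\to\infty$. Then for each $t\in\mathbb R^{d+2}\setminus\{0\}$, $$\frac{t^\top(\hat\beta^{(n)}-\beta)}{\sigma\sqrt{t^\top(X_n^\top X_n)^{-1}t}}\xrightarrow{d}Z\sim\mathcal N(0,1)\quad(n\to\infty).$$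
   Context: (A1): the curvature measures of the parallel sets $F_\varepsilon$ are well defined for a.e. $\varepsilon>0$; (A2): each total curvature $C_k(F_\varepsilon)$ has constant strict sign in $\varepsilon$; (A3): the fractal curvatures $\mathcal C_k(F)=\operatorname{ess\,lim}_{\varepsilon\searrow0}\varepsilon^{s-k}C_k(F_\varepsilon)$ exist, $s$ the Minkowski dimension. $y^{(n)}$ stacks $y_{01},\dots,y_{d1},\dots,y_{0n},\dots,y_{dn}$. $\bar x_n,\widetilde S_n^2$ are the empirical mean and $1/n$-normalized variance of $x_1,\dots,x_n$. *)

theory Defs
  imports "HOL-Probability.Probability" "HOL-Library.Landau_Symbols"
    "Jordan_Normal_Form.Gauss_Jordan_Elimination"
begin

definition regressor :: "(nat \<Rightarrow> real) \<Rightarrow> nat \<Rightarrow> real" where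
  "regressor eps j = - ln (eps j)"

definition emp_mean :: "(nat \<Rightarrow> real) \<Rightarrow> nat \<Rightarrow> real" where
  "emp_mean x n = (\<Sum>j=1..n. x j) / real n"

definition emp_var :: "(nat \<Rightarrow> real) \<Rightarrow> nat \<Rightarrow> real" where
  "emp_var x n = (\<Sum>j=1..n. (x j - emp_mean x n)^2) / real n"

text \<open>Row r (0-based) of the stacked system corresponds to the pair (j,k) with
  j = r div (d+1) + 1 and k = r mod (d+1), i.e. the ordering
  (k,j) = (0,1),...,(d,1),...,(0,n),...,(d,n).\<close>
definition obs_j :: "nat \<Rightarrow> nat \<Rightarrow> nat" where "obs_j d r = r div (d+1) + 1"
definition obs_k :: "nat \<Rightarrow> nat \<Rightarrow> nat" where "obs_k d r = r mod (d+1)"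

definition design_mat :: "nat \<Rightarrow> (nat \<Rightarrow> real) \<Rightarrow> nat \<Rightarrow> real mat" where
  "design_mat d x n = mat (n*(d+1)) (d+2)
     (\<lambda>(r,c). if c = d+1 then x (obs_j d r) else if c = obs_k d r then 1 else 0)"

definition obs_vec :: "nat \<Rightarrow> real vec \<Rightarrow> (nat \<Rightarrow> real) \<Rightarrow> (nat \<Rightarrow> nat \<Rightarrow> real) \<Rightarrow> nat \<Rightarrow> real vec" where
  "obs_vec d \<beta> x \<delta> n = vec (n*(d+1))
     (\<lambda>r. \<beta> $ (obs_k d r) + \<beta> $ (d+1) * x (obs_j d r) + \<delta> (obs_k d r) (obs_j d r))"

definition gram_inv :: "nat \<Rightarrow> (nat \<Rightarrow> real) \<Rightarrow> nat \<Rightarrow> real mat" where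
  "gram_inv d x n = the (mat_inverse (transpose_mat (design_mat d x n) * design_mat d x n))"

definition lse :: "nat \<Rightarrow> real vec \<Rightarrow> (nat \<Rightarrow> real) \<Rightarrow> (nat \<Rightarrow> nat \<Rightarrow> real) \<Rightarrow> nat \<Rightarrow> real vec" where
  "lse d \<beta> x \<delta> n = gram_inv d x n *\<^sub>v (transpose_mat (design_mat d x n) *\<^sub>v obs_vec d \<beta> x \<delta> n)"

end

theory Submission
  imports Defs "Jordan_Normal_Form.Determinant"
begin
unbundle no vec_syntax
no_notation inner (infix \<open>\<bullet>\<close> 70)


lemma exp_neg_le_quad:
  assumes "0 \<le> (a::real)" shows "exp (-a) \<le> 1 - a + a^2/2"
proof -
  let ?f = "\<lambda>x::real. 1 - x + x^2/2 - exp (-x)"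
  have "?f 0 \<le> ?f a"
  proof (rule DERIV_nonneg_imp_nondecreasing[OF assms])
    fix x :: real assume x: "0 \<le> x" "x \<le> a"
    show "\<exists>y. DERIV ?f x :> y \<and> y \<ge> 0"
    proof (intro exI conjI)
      show "DERIV ?f x :> (- 1 + x + exp (-x))"
        by (auto intro!: derivative_eq_intros)
      show "0 \<le> - 1 + x + exp (-x)" using exp_ge_add_one_self[of "-x"] by simp
    qed
  qed
  then show ?thesis by simp
qed

lemma exp_neg_approx:
  assumes "0 \<le> (a::real)" shows "\<bar>1 - a - exp (-a)\<bar> \<le> a^2/2"
  using exp_neg_le_quad[OF assms] exp_ge_add_one_self[of "-a"] assms
  by (simp add: abs_le_iff)

lemma (in prob_space) weighted_clt:
  fixes X :: "nat \<Rightarrow> 'a \<Rightarrow> real" and c :: "nat \<Rightarrow> nat \<Rightarrow> real" and N :: "nat \<Rightarrow> nat"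
    and \<mu> :: "real measure"
  assumes indep: "indep_vars (\<lambda>i. borel) X UNIV"
    and X_distr: "\<And>i. distr M borel (X i) = \<mu>"
    and int1: "integrable \<mu> (\<lambda>x. x)" and int2: "integrable \<mu> (\<lambda>x. x^2)"
    and mean0: "integral\<^sup>L \<mu> (\<lambda>x. x) = 0" and var1: "integral\<^sup>L \<mu> (\<lambda>x. x^2) = 1"
    and sumsq: "eventually (\<lambda>n. (\<Sum>i<N n. (c n i)^2) = 1) sequentially"
    and small: "\<And>e. e > 0 \<Longrightarrow> eventually (\<lambda>n. \<forall>i<N n. \<bar>c n i\<bar> \<le> e) sequentially"
  shows "weak_conv_m (\<lambda>n. distr M borel (\<lambda>\<omega>. \<Sum>i<N n. c n i * X i \<omega>)) std_normal_distribution"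
proof -
  have X_rv [simp, measurable]: "random_variable borel (X n)" for n
    using indep unfolding indep_vars_def2 by simp
  interpret \<mu>: real_distribution \<mu>
    by (subst X_distr [symmetric, of 0], rule real_distribution_distr, simp)
  define h where "h \<delta> = (LINT x|\<mu>. min (6 * x\<^sup>2) (\<delta> * \<bar>x\<bar> ^ 3))" for \<delta> :: real
  have hint: "integrable \<mu> (\<lambda>x. min (6 * x\<^sup>2) (\<delta> * \<bar>x\<bar> ^ 3))" if "\<delta> \<ge> 0" for \<delta>
    by (rule Bochner_Integration.integrable_bound[where f="\<lambda>x. 6 * x^2"]) (use int2 that in auto)
  have hmono: "h \<delta>' \<le> h \<delta>" if "0 \<le> \<delta>'" "\<delta>' \<le> \<delta>" for \<delta> \<delta>'
    unfolding h_def using that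
    by (intro integral_mono hint)
       (auto intro!: min.coboundedI2 mult_right_mono)
  have hsmall: "\<exists>\<delta>>0. h \<delta> \<le> \<eta>" if "\<eta> > 0" for \<eta>
  proof -
    have "\<And>x. (\<lambda>m. min (6 * x\<^sup>2) ((1 / real (Suc m)) * \<bar>x\<bar> ^ 3)) \<longlonglongrightarrow> min (6 * x\<^sup>2) 0"
      by (intro tendsto_intros tendsto_mult_left_zero lim_1_over_n[THEN LIMSEQ_Suc])
    then have "(\<lambda>m. h (1 / real (Suc m))) \<longlonglongrightarrow> (LINT x|\<mu>. min (6 * x\<^sup>2) 0)"
      unfolding h_def
      by (intro integral_dominated_convergence [where w = "\<lambda>x. 6 * x^2"]) (use int2 in auto)
    also have "(LINT x|\<mu>. min (6 * x\<^sup>2) 0) = 0"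
      by (simp add: min_absorb2)
    finally have "(\<lambda>m. h (1 / real (Suc m))) \<longlonglongrightarrow> 0" .
    from LIMSEQ_D[OF this that] obtain m where "norm (h (1 / real (Suc m))) < \<eta>" by auto
    then show ?thesis by (intro exI[of _ "1 / real (Suc m)"]) auto
  qed
  have charX: "char (distr M borel (\<lambda>\<omega>. a * X i \<omega>)) u = char \<mu> (a * u)" for a u i
    unfolding char_def
    by (subst X_distr [symmetric, of i]) (auto simp: integral_distr ac_simps)
  have char_sum: "char (distr M borel (\<lambda>\<omega>. \<Sum>i<N n. c n i * X i \<omega>)) u =
      (\<Prod>i<N n. char \<mu> (c n i * u))" for n u
  proof -
    have "char (distr M borel (\<lambda>\<omega>. \<Sum>i<N n. c n i * X i \<omega>)) u =
      (\<Prod>i<N n. char (distr M borel (\<lambda>\<omega>. c n i * X i \<omega>)) u)"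
      apply (rule char_distr_sum)
      apply (rule indep_vars_compose2[where X=X])
      apply (rule indep_vars_subset)
      apply (rule indep)
      apply auto
      done
    then show ?thesis by (simp add: charX)
  qed
  have approx: "cmod (char \<mu> v - (1 - v^2 / 2)) \<le> v^2 / 6 * h \<bar>v\<bar>" for v
  proof -
    have "\<mu>.variance (\<lambda>x. x) = 1" using mean0 var1 by simp
    from \<mu>.char_approx3[OF int1 mean0 int2 this, of v] show ?thesis
      by (simp add: h_def)
  qed
  show ?thesis
  proof (rule levy_continuity)
    show "real_distribution (distr M borel (\<lambda>\<omega>. \<Sum>i<N n. c n i * X i \<omega>))" for n
      by (rule real_distribution_distr) simp
    show "real_distribution std_normal_distribution" by (rule real_dist_normal_dist)
    fix u :: real
    show "(\<lambda>n. char (distr M borel (\<lambda>\<omega>. \<Sum>i<N n. c n i * X i \<omega>)) u) \<longlonglongrightarrow> char std_normal_distribution u"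
    proof (rule tendsto_iff[THEN iffD2], intro allI impI)
      fix \<eta> :: real assume \<eta>: "\<eta> > 0"
      define K where "K = u^2/6 + 1"
      have K: "K > 0" unfolding K_def by (simp add: add_nonneg_pos)
      obtain \<delta> where \<delta>: "\<delta> > 0" "h \<delta> \<le> \<eta> / (2 * K)"
        using hsmall[of "\<eta> / (2*K)"] \<eta> K by auto
      define \<epsilon> where "\<epsilon> = min (\<delta> / (\<bar>u\<bar> + 1)) (min 1 (\<eta> / (u^4 + 1)))"
      have \<epsilon>pos: "\<epsilon> > 0" unfolding \<epsilon>_def using \<delta> \<eta> by (simp add: add_nonneg_pos)
      have \<epsilon>1: "\<epsilon> \<le> 1" unfolding \<epsilon>_def by simp
      have \<epsilon>u: "\<epsilon> * \<bar>u\<bar> \<le> \<delta>"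
      proof -
        have "\<epsilon> * \<bar>u\<bar> \<le> \<delta> / (\<bar>u\<bar> + 1) * \<bar>u\<bar>"
          unfolding \<epsilon>_def by (intro mult_right_mono) auto
        also have "\<dots> \<le> \<delta> / (\<bar>u\<bar> + 1) * (\<bar>u\<bar> + 1)"
          using \<delta> by (intro mult_left_mono) auto
        finally show ?thesis by simp
      qed
      have u4': "0 \<le> u^4" by (rule zero_le_even_power) simp
      then have u4: "u^4 + 1 \<noteq> 0" by linarith
      have \<epsilon>\<eta>: "\<epsilon> * u^4 < \<eta>"
      proof -
        have "\<epsilon> * u^4 \<le> \<eta> / (u^4 + 1) * u^4"
          unfolding \<epsilon>_def by (intro mult_right_mono) auto
        also have "\<dots> < \<eta> / (u^4 + 1) * (u^4 + 1)"
          using \<eta> by (intro mult_strict_left_mono) (auto simp: add_nonneg_pos)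
        also have "\<dots> = \<eta>" using u4 by simp
        finally show ?thesis .
      qed
      have "\<forall>\<^sub>F n in sequentially. dist (\<Prod>i<N n. char \<mu> (c n i * u)) (complex_of_real (exp (- (u\<^sup>2 / 2)))) < \<eta>"
        using sumsq small[OF \<epsilon>pos]
      proof eventually_elim
        case (elim n)
        let ?w = "\<lambda>i. complex_of_real (exp (- ((c n i * u)^2 / 2)))"
        have "exp (- (u\<^sup>2 / 2)) = exp (\<Sum>i<N n. - ((c n i * u)^2 / 2))"
          using elim(1) by (simp add: sum_negf power_mult_distrib sum_divide_distrib[symmetric]
               sum_distrib_right[symmetric])
        also have "\<dots> = (\<Prod>i<N n. exp (- ((c n i * u)^2 / 2)))" by (rule exp_sum) simp
        finally have e: "complex_of_real (exp (- (u\<^sup>2 / 2))) = (\<Prod>i<N n. ?w i)" by simp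
        have trm: "cmod (char \<mu> (c n i * u) - ?w i) \<le> (c n i)^2 * (u^2/6 * h \<delta> + u^4 * \<epsilon> / 8)"
          if i: "i < N n" for i
        proof -
          let ?v = "c n i * u"
          have ci: "\<bar>c n i\<bar> \<le> \<epsilon>" using elim(2) i by auto
          have vd: "\<bar>?v\<bar> \<le> \<delta>"
            using mult_right_mono[OF ci, of "\<bar>u\<bar>"] \<epsilon>u by (simp add: abs_mult)
          have 1: "cmod (char \<mu> ?v - (1 - ?v^2 / 2)) \<le> ?v^2/6 * h \<delta>"
            using approx[of ?v] hmono[of "\<bar>?v\<bar>" \<delta>] vd
            by (smt (verit) mult_left_mono zero_le_divide_iff zero_le_power2)
          have "\<bar>1 - ?v^2/2 - exp (- (?v^2/2))\<bar> \<le> (?v^2/2)^2/2"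
            by (rule exp_neg_approx) simp
          also have "(?v^2/2)^2/2 = (c n i)^2 * ((c n i)^2 * u^4 / 8)"
            by (simp add: power_mult_distrib field_simps)
          also have "\<dots> \<le> (c n i)^2 * (u^4 * \<epsilon> / 8)"
          proof (intro mult_left_mono)
            have "(c n i)^2 \<le> \<epsilon>^2" using power_mono[OF ci abs_ge_zero, of 2] by simp
            also have "\<dots> \<le> \<epsilon>" using \<epsilon>1 \<epsilon>pos by (simp add: power2_eq_square mult_le_cancel_left1)
            finally have "(c n i)^2 \<le> \<epsilon>" .
            from mult_right_mono[OF this u4']
            show "(c n i)\<^sup>2 * u ^ 4 / 8 \<le> u ^ 4 * \<epsilon> / 8"
              by (simp add: mult.commute)
          qed simp
          finally have 2: "cmod (complex_of_real (1 - ?v^2/2) - ?w i) \<le> (c n i)^2 * (u^4 * \<epsilon> / 8)"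
            by (simp del: of_real_diff add: of_real_diff[symmetric])
          have "cmod (char \<mu> ?v - ?w i) \<le> cmod (char \<mu> ?v - (1 - ?v^2 / 2)) + cmod (complex_of_real (1 - ?v^2/2) - ?w i)"
            using norm_triangle_ineq[of "char \<mu> ?v - (1 - ?v^2 / 2)" "complex_of_real (1 - ?v^2/2) - ?w i"]
            by simp
          also have "\<dots> \<le> ?v^2/6 * h \<delta> + (c n i)^2 * (u^4 * \<epsilon> / 8)"
            using 1 2 by simp
          also have "\<dots> = (c n i)^2 * (u^2/6 * h \<delta> + u^4 * \<epsilon> / 8)"
            by (simp add: power_mult_distrib field_simps)
          finally show ?thesis .
        qed
        have "dist (\<Prod>i<N n. char \<mu> (c n i * u)) (complex_of_real (exp (- (u\<^sup>2 / 2))))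
            = cmod ((\<Prod>i<N n. char \<mu> (c n i * u)) - (\<Prod>i<N n. ?w i))"
          by (simp add: e dist_norm)
        also have "\<dots> \<le> (\<Sum>i<N n. cmod (char \<mu> (c n i * u) - ?w i))"
          by (rule norm_prod_diff) (auto simp: \<mu>.cmod_char_le_1)
        also have "\<dots> \<le> (\<Sum>i<N n. (c n i)^2 * (u^2/6 * h \<delta> + u^4 * \<epsilon> / 8))"
          by (rule sum_mono) (rule trm, simp)
        also have "\<dots> = u^2/6 * h \<delta> + u^4 * \<epsilon> / 8"
          using elim(1) by (simp add: sum_distrib_right[symmetric])
        also have "\<dots> < \<eta>"
        proof -
          have "u^2/6 * h \<delta> \<le> K * (\<eta> / (2 * K))"
            using \<delta> h_def
            by (intro mult_mono) (auto simp: K_def intro!: integral_nonneg_AE)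
          also have "\<dots> = \<eta> / 2" using K by simp
          finally have A: "u^2/6 * h \<delta> \<le> \<eta> / 2" .
          have "u^4 * \<epsilon> = \<epsilon> * u^4" by (rule mult.commute)
          then show ?thesis using A \<epsilon>\<eta> \<eta> by linarith
        qed
        finally show ?case by simp
      qed
      then show "\<forall>\<^sub>F n in sequentially. dist (char (distr M borel (\<lambda>\<omega>. \<Sum>i<N n. c n i * X i \<omega>)) u) (char std_normal_distribution u) < \<eta>"
        by (simp add: char_sum char_std_normal_distribution)
    qed
  qed
qed




lemma block_divmod: "k < (m::nat) \<Longrightarrow> (j*m+k) div m = j \<and> (j*m+k) mod m = k"
  by (cases "m = 0") (simp_all add: div_mult_self3 mod_mult_self3)

lemma obs_jk_block:
  assumes "k < d+1" shows "obs_j d (j*(d+1)+k) = j+1" "obs_k d (j*(d+1)+k) = k"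
  using block_divmod[OF assms, of j] unfolding obs_j_def obs_k_def by simp_all

lemma obs_k_le: "obs_k d r \<le> d"
proof -
  have "r mod (d+1) < d+1" by simp
  then show ?thesis unfolding obs_k_def by linarith
qed

lemma obs_j_ge: "obs_j d r \<ge> 1"
  unfolding obs_j_def by simp

lemma obs_j_le: assumes "r < n*(d+1)" shows "obs_j d r \<le> n"
proof -
  have "r div (d+1) < n" using assms by (simp add: less_mult_imp_div_less)
  then show ?thesis unfolding obs_j_def by simp
qed

lemma obs_inj: "inj (\<lambda>r. (obs_k d r, obs_j d r))"
proof (rule injI)
  fix r r' assume "(obs_k d r, obs_j d r) = (obs_k d r', obs_j d r')"
  then have "r mod (d+1) = r' mod (d+1)" "r div (d+1) = r' div (d+1)"
    unfolding obs_k_def obs_j_def by simp_all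
  then show "r = r'" by (metis div_mult_mod_eq)
qed

lemma design_carrier: "design_mat d x n \<in> carrier_mat (n*(d+1)) (d+2)"
  unfolding design_mat_def by simp

lemma design_mult:
  assumes r: "r < n*(d+1)" and v: "v \<in> carrier_vec (d+2)"
  shows "(design_mat d x n *\<^sub>v v) $ r = v $ (obs_k d r) + x (obs_j d r) * v $ (d+1)"
proof -
  have k: "obs_k d r < d+1" using obs_k_le[of d r] by simp
  have "(design_mat d x n *\<^sub>v v) $ r = row (design_mat d x n) r \<bullet> v"
    using r unfolding design_mat_def by (intro index_mult_mat_vec) simp
  also have "row (design_mat d x n) r = vec (d+2) (\<lambda>i. if i = d+1 then x (obs_j d r) else if i = obs_k d r then 1 else 0)"
    using r unfolding design_mat_def by (subst row_mat) auto
  finally have "(design_mat d x n *\<^sub>v v) $ r = (\<Sum>i<Suc (d+1). (if i = d+1 then x (obs_j d r) else if i = obs_k d r then 1 else 0) * v $ i)"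
    using v unfolding scalar_prod_def
    by (simp add: lessThan_atLeast0)
  also have "\<dots> = (\<Sum>i<d+1. (if i = d+1 then x (obs_j d r) else if i = obs_k d r then 1 else 0) * v $ i)
      + x (obs_j d r) * v $ (d+1)"
    by (subst sum.lessThan_Suc) simp
  also have "(\<Sum>i<d+1. (if i = d+1 then x (obs_j d r) else if i = obs_k d r then 1 else 0) * v $ i)
      = (\<Sum>i<d+1. (if i = obs_k d r then v $ i else 0))"
    by (rule sum.cong) auto
  also have "\<dots> = v $ (obs_k d r)" using k by (simp add: sum.delta)
  finally show ?thesis .
qed

lemma block_lt: "k < d+1 \<Longrightarrow> j < n \<Longrightarrow> j*(d+1)+k < n*(d+(1::nat))"
proof -
  assume that: "k < d+1" "j < n"
  have "j*(d+1)+k < j*(d+1) + (d+1)" using that by simp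
  also have "\<dots> = Suc j * (d+1)" by simp
  also have "\<dots> \<le> n*(d+1)" using that by (intro mult_right_mono) auto
  finally show ?thesis .
qed

lemma design_block:
  assumes "k < d+1" "j < n" "v \<in> carrier_vec (d+2)"
  shows "(design_mat d x n *\<^sub>v v) $ (j*(d+1)+k) = v $ k + x (j+1) * v $ (d+1)"
  using design_mult[OF block_lt[OF assms(1,2)] assms(3), of x] obs_jk_block[OF assms(1), of j]
  by simp

lemma design_inj:
  fixes x :: "nat \<Rightarrow> real"
  assumes n: "n \<ge> 2" and x12: "x 1 \<noteq> x 2" and z: "z \<in> carrier_vec (d+2)"
    and zero: "\<And>r. r < n*(d+1) \<Longrightarrow> (design_mat d x n *\<^sub>v z) $ r = 0"
  shows "z = 0\<^sub>v (d+2)"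
proof -
  have e: "z $ k + x (j+1) * z $ (d+1) = 0" if "k < d+1" "j < n" for k j
    using zero[OF block_lt[OF that]] design_block[OF that z, of x] by simp
  have h1: "z $ 0 + x 1 * z $ (d+1) = 0" using e[of 0 0] n by simp
  have h2: "z $ 0 + x 2 * z $ (d+1) = 0" using e[of 0 1] n by (simp add: numeral_2_eq_2)
  have "(x 1 - x 2) * z $ (d+1) = 0" unfolding left_diff_distrib using h1 h2 by linarith
  then have s: "z $ (d+1) = 0" using x12 by simp
  have "z $ i = 0" if "i < d+2" for i
  proof (cases "i = d+1")
    case True then show ?thesis using s by simp
  next
    case False 
    then have "i < d+1" using that by simp
    then show ?thesis using e[of i 0] s n by simp
  qed
  then show ?thesis using z by (intro eq_vecI) auto
qed

lemma self_scalar_sum: "(w::real vec) \<bullet> w = (\<Sum>r<dim_vec w. (w $ r)^2)"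
  unfolding scalar_prod_def by (simp add: lessThan_atLeast0 power2_eq_square)

lemma self_scalar_zero:
  assumes "(w::real vec) \<bullet> w = 0" "r < dim_vec w" shows "w $ r = 0"
proof -
  have "(\<Sum>r<dim_vec w. (w $ r)^2) = 0" using assms self_scalar_sum by simp
  then have "\<forall>r\<in>{..<dim_vec w}. (w $ r)^2 = 0" by (subst (asm) sum_nonneg_eq_0_iff) auto
  then show ?thesis using assms(2) by simp
qed

lemma gram_inverse:
  fixes x :: "nat \<Rightarrow> real"
  assumes n: "n \<ge> 2" and x12: "x 1 \<noteq> x 2"
  shows "gram_inv d x n \<in> carrier_mat (d+2) (d+2)"
    "gram_inv d x n * (transpose_mat (design_mat d x n) * design_mat d x n) = 1\<^sub>m (d+2)"
    "(transpose_mat (design_mat d x n) * design_mat d x n) * gram_inv d x n = 1\<^sub>m (d+2)"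
proof -
  define X where "X = design_mat d x n"
  define A where "A = transpose_mat X * X"
  have X: "X \<in> carrier_mat (n*(d+1)) (d+2)" unfolding X_def by (rule design_carrier)
  have A: "A \<in> carrier_mat (d+2) (d+2)" unfolding A_def using X by auto
  have "Determinant.det A \<noteq> 0"
  proof
    assume "Determinant.det A = 0"
    then obtain z where z: "z \<in> carrier_vec (d+2)" "z \<noteq> 0\<^sub>v (d+2)" "A *\<^sub>v z = 0\<^sub>v (d+2)"
      using det_0_iff_vec_prod_zero[OF A] by blast
    have "(X *\<^sub>v z) \<bullet> (X *\<^sub>v z) = (transpose_mat X *\<^sub>v (X *\<^sub>v z)) \<bullet> z"
      using transpose_vec_mult_scalar[OF X z(1) mult_mat_vec_carrier[OF X z(1)]] by simp
    also have "transpose_mat X *\<^sub>v (X *\<^sub>v z) = A *\<^sub>v z"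
      unfolding A_def using X z by (subst assoc_mult_mat_vec) auto
    also have "\<dots> \<bullet> z = 0" using z by simp
    finally have "(X *\<^sub>v z) \<bullet> (X *\<^sub>v z) = 0" .
    then have "\<And>r. r < n*(d+1) \<Longrightarrow> (design_mat d x n *\<^sub>v z) $ r = 0"
      using self_scalar_zero X unfolding X_def by auto
    from design_inj[OF n x12 z(1) this] z(2) show False by simp
  qed
  from det_non_zero_imp_unit[OF A this, where b="()"] mat_inverse(1)[OF A, where b="()"]
  have "mat_inverse A \<noteq> None" by blast
  then obtain B where B: "mat_inverse A = Some B" by auto
  from mat_inverse(2)[OF A B] have "A * B = 1\<^sub>m (d+2)" "B * A = 1\<^sub>m (d+2)" "B \<in> carrier_mat (d+2) (d+2)"
    by auto
  moreover have "gram_inv d x n = B" unfolding gram_inv_def using B unfolding A_def X_def by simp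
  ultimately show "gram_inv d x n \<in> carrier_mat (d+2) (d+2)"
    "gram_inv d x n * (transpose_mat (design_mat d x n) * design_mat d x n) = 1\<^sub>m (d+2)"
    "(transpose_mat (design_mat d x n) * design_mat d x n) * gram_inv d x n = 1\<^sub>m (d+2)"
    unfolding A_def X_def by auto
qed




lemma stat_repr:
  fixes x :: "nat \<Rightarrow> real" and gg :: "nat \<Rightarrow> nat \<Rightarrow> real"
  assumes n: "n \<ge> 2" and x12: "x 1 \<noteq> x 2" and \<beta>: "\<beta> \<in> carrier_vec (d+2)"
    and t: "t \<in> carrier_vec (d+2)" and t0: "t \<noteq> 0\<^sub>v (d+2)" and \<sigma>: "\<sigma> \<noteq> 0"
  defines "w \<equiv> design_mat d x n *\<^sub>v (transpose_mat (gram_inv d x n) *\<^sub>v t)"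
  shows "t \<bullet> (gram_inv d x n *\<^sub>v t) = w \<bullet> w"
    and "w \<bullet> w > 0" and "dim_vec w = n*(d+1)"
    and "(t \<bullet> (lse d \<beta> x (\<lambda>k j. \<sigma> * gg k j) n - \<beta>)) / (\<sigma> * sqrt (t \<bullet> (gram_inv d x n *\<^sub>v t)))
       = (\<Sum>r<n*(d+1). w $ r / sqrt (w \<bullet> w) * gg (obs_k d r) (obs_j d r))"
proof -
  define X where "X = design_mat d x n"
  define G where "G = gram_inv d x n"
  define A where "A = transpose_mat X * X"
  define v where "v = transpose_mat G *\<^sub>v t"
  define gv where "gv = vec (n*(d+1)) (\<lambda>r. gg (obs_k d r) (obs_j d r))"
  have X: "X \<in> carrier_mat (n*(d+1)) (d+2)" unfolding X_def by (rule design_carrier)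
  have XT: "transpose_mat X \<in> carrier_mat (d+2) (n*(d+1))" using X by simp
  have A: "A \<in> carrier_mat (d+2) (d+2)" unfolding A_def using X by auto
  have G: "G \<in> carrier_mat (d+2) (d+2)" and GA: "G * A = 1\<^sub>m (d+2)" and AG: "A * G = 1\<^sub>m (d+2)"
    using gram_inverse[OF n x12, of d] unfolding G_def A_def X_def by auto
  have GT: "transpose_mat G \<in> carrier_mat (d+2) (d+2)" using G by simp
  have v: "v \<in> carrier_vec (d+2)" unfolding v_def using GT t by simp
  have wX: "w = X *\<^sub>v v" unfolding w_def X_def v_def G_def ..
  have w: "w \<in> carrier_vec (n*(d+1))" unfolding wX using X v by simp
  have gv: "gv \<in> carrier_vec (n*(d+1))" unfolding gv_def by simp
  have AT: "transpose_mat A = A" unfolding A_def using X by (simp add: transpose_mult[OF XT X])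
  have Av: "A *\<^sub>v v = t"
  proof -
    have "A *\<^sub>v v = (A * transpose_mat G) *\<^sub>v t" unfolding v_def using A GT t by simp
    also have "A * transpose_mat G = transpose_mat (G * A)"
      using transpose_mult[OF G A] AT by simp
    also have "\<dots> = 1\<^sub>m (d+2)" using GA by simp
    finally show ?thesis using t by simp
  qed
  have ww: "w \<bullet> w = v \<bullet> t"
  proof -
    have "w \<bullet> w = (transpose_mat X *\<^sub>v (X *\<^sub>v v)) \<bullet> v"
      unfolding wX using transpose_vec_mult_scalar[OF X v mult_mat_vec_carrier[OF X v]] by simp
    also have "transpose_mat X *\<^sub>v (X *\<^sub>v v) = A *\<^sub>v v"
      unfolding A_def using X v by (subst assoc_mult_mat_vec) auto
    finally show ?thesis using Av comm_scalar_prod[OF t v] by simp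
  qed
  have tGt: "t \<bullet> (G *\<^sub>v t) = v \<bullet> t"
    unfolding v_def using transpose_vec_mult_scalar[OF G t t] by simp
  show 1: "t \<bullet> (gram_inv d x n *\<^sub>v t) = w \<bullet> w" using tGt ww unfolding G_def by simp
  show 3: "dim_vec w = n*(d+1)" using w by simp
  show pos: "w \<bullet> w > 0"
  proof -
    have "w \<bullet> w \<ge> 0" unfolding self_scalar_sum by (intro sum_nonneg) auto
    moreover have "w \<bullet> w \<noteq> 0"
    proof
      assume "w \<bullet> w = 0"
      then have "\<And>r. r < n*(d+1) \<Longrightarrow> (design_mat d x n *\<^sub>v v) $ r = 0"
        using self_scalar_zero[of w] 3 unfolding wX X_def by auto
      from design_inj[OF n x12 v this] have "v = 0\<^sub>v (d+2)" .
      moreover have "A *\<^sub>v 0\<^sub>v (d+2) = 0\<^sub>v (d+2)"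
        using A by (intro eq_vecI) (auto simp: scalar_prod_def)
      ultimately have "t = 0\<^sub>v (d+2)" using Av by simp
      with t0 show False by simp
    qed
    ultimately show ?thesis by simp
  qed
  have obs: "obs_vec d \<beta> x (\<lambda>k j. \<sigma> * gg k j) n = X *\<^sub>v \<beta> + \<sigma> \<cdot>\<^sub>v gv"
  proof (rule eq_vecI)
    fix r assume "r < dim_vec (X *\<^sub>v \<beta> + \<sigma> \<cdot>\<^sub>v gv)"
    then have r: "r < n*(d+1)" using X gv by simp
    show "obs_vec d \<beta> x (\<lambda>k j. \<sigma> * gg k j) n $ r = (X *\<^sub>v \<beta> + \<sigma> \<cdot>\<^sub>v gv) $ r"
      using r X design_mult[OF r \<beta>, of x] unfolding obs_vec_def gv_def X_def
      by (simp add: mult.commute)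
  qed (use X gv in \<open>simp add: obs_vec_def\<close>)
  define q where "q = G *\<^sub>v (transpose_mat X *\<^sub>v gv)"
  have q: "q \<in> carrier_vec (d+2)" unfolding q_def using G XT gv by simp
  have lse: "lse d \<beta> x (\<lambda>k j. \<sigma> * gg k j) n = \<beta> + \<sigma> \<cdot>\<^sub>v q"
  proof -
    have Xb: "X *\<^sub>v \<beta> \<in> carrier_vec (n*(d+1))" using X \<beta> by simp
    have "lse d \<beta> x (\<lambda>k j. \<sigma> * gg k j) n = G *\<^sub>v (transpose_mat X *\<^sub>v (X *\<^sub>v \<beta> + \<sigma> \<cdot>\<^sub>v gv))"
      unfolding lse_def obs G_def X_def ..
    also have "transpose_mat X *\<^sub>v (X *\<^sub>v \<beta> + \<sigma> \<cdot>\<^sub>v gv) = A *\<^sub>v \<beta> + \<sigma> \<cdot>\<^sub>v (transpose_mat X *\<^sub>v gv)"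
      using mult_add_distrib_mat_vec[OF XT Xb smult_carrier_vec[THEN iffD2, OF gv]]
        mult_mat_vec[OF XT gv] X \<beta> unfolding A_def by (simp add: assoc_mult_mat_vec)
    also have "G *\<^sub>v (A *\<^sub>v \<beta> + \<sigma> \<cdot>\<^sub>v (transpose_mat X *\<^sub>v gv)) = G *\<^sub>v (A *\<^sub>v \<beta>) + \<sigma> \<cdot>\<^sub>v q"
      unfolding q_def using G A \<beta> XT gv
      by (simp add: mult_add_distrib_mat_vec[OF G] mult_mat_vec[OF G])
    also have "G *\<^sub>v (A *\<^sub>v \<beta>) = \<beta>"
      using G A \<beta> GA by (simp flip: assoc_mult_mat_vec)
    finally show ?thesis .
  qed
  have num: "t \<bullet> (lse d \<beta> x (\<lambda>k j. \<sigma> * gg k j) n - \<beta>) = \<sigma> * (gv \<bullet> w)"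
  proof -
    have "lse d \<beta> x (\<lambda>k j. \<sigma> * gg k j) n - \<beta> = \<sigma> \<cdot>\<^sub>v q"
      unfolding lse using \<beta> q by (intro eq_vecI) auto
    then have "t \<bullet> (lse d \<beta> x (\<lambda>k j. \<sigma> * gg k j) n - \<beta>) = \<sigma> * (t \<bullet> q)"
      using t q by simp
    also have "t \<bullet> q = v \<bullet> (transpose_mat X *\<^sub>v gv)"
      unfolding q_def v_def using transpose_vec_mult_scalar[OF G _ t, of "transpose_mat X *\<^sub>v gv"] XT gv
      by simp
    also have "\<dots> = (transpose_mat X *\<^sub>v gv) \<bullet> v"
      using v XT gv by (intro comm_scalar_prod[of _ "d+2"]) auto
    also have "\<dots> = gv \<bullet> w" unfolding wX using transpose_vec_mult_scalar[OF X v gv] .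
    finally show ?thesis .
  qed
  have "(t \<bullet> (lse d \<beta> x (\<lambda>k j. \<sigma> * gg k j) n - \<beta>)) / (\<sigma> * sqrt (t \<bullet> (gram_inv d x n *\<^sub>v t)))
      = (gv \<bullet> w) / sqrt (w \<bullet> w)"
    unfolding num 1 using \<sigma> by simp
  also have "gv \<bullet> w = (\<Sum>r<n*(d+1). gg (obs_k d r) (obs_j d r) * w $ r)"
    unfolding scalar_prod_def gv_def using w by (simp add: lessThan_atLeast0)
  finally show "(t \<bullet> (lse d \<beta> x (\<lambda>k j. \<sigma> * gg k j) n - \<beta>)) / (\<sigma> * sqrt (t \<bullet> (gram_inv d x n *\<^sub>v t)))
       = (\<Sum>r<n*(d+1). w $ r / sqrt (w \<bullet> w) * gg (obs_k d r) (obs_j d r))"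
    by (simp add: sum_divide_distrib mult.commute)
qed




lemma sum_sq_decomp:
  fixes x :: "nat \<Rightarrow> real"
  assumes n: "n \<ge> 1"
  shows "(\<Sum>j=1..n. (a + x j * s)^2) = n * (a + s * emp_mean x n)^2 + s^2 * (n * emp_var x n)"
proof -
  define m where "m = emp_mean x n"
  have nz: "real n \<noteq> 0" using n by simp
  have sm: "(\<Sum>j=1..n. x j - m) = 0"
    using nz by (simp add: sum_subtractf m_def emp_mean_def)
  have "(\<Sum>j=1..n. (a + x j * s)^2) = (\<Sum>j=1..n. (a + s*m)^2 + 2*(a + s*m)* s*(x j - m) + s^2*(x j - m)^2)"
    by (rule sum.cong) (auto simp: power2_eq_square algebra_simps)
  also have "\<dots> = n * (a + s*m)^2 + 2*(a + s*m)* s*(\<Sum>j=1..n. x j - m) + s^2 * (\<Sum>j=1..n. (x j - m)^2)"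
    by (simp add: sum.distrib sum_distrib_left)
  also have "(\<Sum>j=1..n. (x j - m)^2) = n * emp_var x n"
    using nz by (simp add: emp_var_def m_def)
  finally show ?thesis using sm by (simp add: m_def)
qed

lemma leverage:
  fixes x :: "nat \<Rightarrow> real"
  assumes n1: "n \<ge> 1" and mono: "\<And>i j. 1 \<le> i \<Longrightarrow> i \<le> j \<Longrightarrow> x i \<le> x j"
    and V: "emp_var x n > 0" and v: "v \<in> carrier_vec (d+2)" and r: "r < n*(d+1)"
  shows "((design_mat d x n *\<^sub>v v) $ r)^2 \<le>
    (2/n + 2*(x n - x 1)^2/(n * emp_var x n)) * (\<Sum>r'<n*(d+1). ((design_mat d x n *\<^sub>v v) $ r')^2)"
proof -
  define W where "W = design_mat d x n *\<^sub>v v"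
  define k where "k = obs_k d r"
  define j0 where "j0 = obs_j d r"
  define a where "a = v $ k"
  define s where "s = v $ (d+1)"
  define m where "m = emp_mean x n"
  define Vn where "Vn = emp_var x n"
  define D where "D = (x n - x 1)^2"
  define H where "H = 2/n + 2*D/(n * Vn)"
  define P where "P = (a + s*m)^2"
  have k: "k < d+1" unfolding k_def using obs_k_le[of d r] by simp
  have j0: "1 \<le> j0" "j0 \<le> n" unfolding j0_def using obs_j_ge obs_j_le[OF r] by auto
  have nz: "real n > 0" using n1 by simp
  have Vn: "Vn > 0" using V unfolding Vn_def .
  have Wr: "W $ r = a + x j0 * s"
    unfolding W_def a_def s_def k_def j0_def using design_mult[OF r v] .
  have T: "(\<Sum>j=1..n. (a + x j * s)^2) = n * P + s^2 * (n * Vn)"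
    unfolding P_def m_def Vn_def by (rule sum_sq_decomp[OF n1])
  have sub: "(\<Sum>j=1..n. (a + x j * s)^2) \<le> (\<Sum>r'<n*(d+1). (W $ r')^2)"
  proof -
    have "(\<Sum>j=1..n. (a + x j * s)^2) = (\<Sum>j<n. (a + x (Suc j) * s)^2)"
      using sum.atLeast1_atMost_eq[of "\<lambda>j. (a + x j * s)^2" n] by simp
    also have "\<dots> = (\<Sum>j<n. (W $ (j*(d+1)+k))^2)"
      unfolding W_def a_def s_def using design_block[OF k _ v, of _ n x] by simp
    also have "\<dots> = (\<Sum>r'\<in>(\<lambda>j. j*(d+1)+k) ` {..<n}. (W $ r')^2)"
    proof (rule sum.reindex[symmetric, unfolded comp_def])
      show "inj_on (\<lambda>j. j*(d+1)+k) {..<n}"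
      proof (rule inj_onI)
        fix i j assume e: "i*(d+1)+k = j*(d+1)+k"
        have "(i*(d+1)+k) div (d+1) = (j*(d+1)+k) div (d+1)" using e by (rule arg_cong)
        with block_divmod[OF k, of i] block_divmod[OF k, of j] show "i = j" by simp
      qed
    qed
    also have "\<dots> \<le> (\<Sum>r'<n*(d+1). (W $ r')^2)"
      by (rule sum_mono2) (use block_lt[OF k] in auto)
    finally show ?thesis .
  qed
  have mb: "x 1 \<le> m" "m \<le> x n"
  proof -
    have "(\<Sum>j=1..n. x 1) \<le> (\<Sum>j=1..n. x j)" by (rule sum_mono) (auto intro: mono)
    then have "n * x 1 \<le> n * m" using nz by (simp add: m_def emp_mean_def)
    then show "x 1 \<le> m" using nz by simp
    have "(\<Sum>j=1..n. x j) \<le> (\<Sum>j=1..n. x n)" by (rule sum_mono) (auto intro: mono)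
    then have "n * m \<le> n * x n" using nz by (simp add: m_def emp_mean_def)
    then show "m \<le> x n" using nz by simp
  qed
  have xj: "x 1 \<le> x j0" "x j0 \<le> x n" using mono j0 by auto
  have Dle: "(x j0 - m)^2 \<le> D"
  proof -
    have "\<bar>x j0 - m\<bar> \<le> x n - x 1" using mb xj by auto
    then have "\<bar>x j0 - m\<bar>^2 \<le> (x n - x 1)^2" by (intro power_mono) auto
    then show ?thesis unfolding D_def by simp
  qed
  have "(W $ r)^2 = ((a + s*m) + s*(x j0 - m))^2" unfolding Wr by (simp add: algebra_simps)
  also have "\<dots> \<le> 2*P + 2* s^2*(x j0 - m)^2"
  proof -
    have "0 \<le> ((a + s*m) - s*(x j0 - m))^2" by simp
    then show ?thesis unfolding P_def by (simp add: power2_eq_square algebra_simps)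
  qed
  also have "\<dots> \<le> 2*P + 2* s^2*D"
    using Dle by (intro add_left_mono mult_left_mono) auto
  also have "\<dots> \<le> H * (n * P + s^2 * (n * Vn))"
  proof -
    have P0: "P \<ge> 0" "D \<ge> 0" unfolding P_def D_def by auto
    have "H * (n * P + s^2 * (n * Vn)) = 2*P + 2* s^2*D + (2* s^2*Vn + 2*D*P/Vn)"
      unfolding H_def using nz Vn by (simp add: field_simps)
    moreover have "2* s^2*Vn + 2*D*P/Vn \<ge> 0" using P0 Vn by auto
    ultimately show ?thesis by linarith
  qed
  also have "\<dots> \<le> H * (\<Sum>r'<n*(d+1). (W $ r')^2)"
  proof (rule mult_left_mono)
    show "n * P + s^2 * (n * Vn) \<le> (\<Sum>r'<n*(d+1). (W $ r')^2)" using sub T by simp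
    show "0 \<le> H" unfolding H_def D_def using nz Vn by auto
  qed
  finally show ?thesis unfolding W_def H_def D_def Vn_def by simp
qed




lemma (in prob_space) indep_vars_reindex:
  assumes "indep_vars M' X I" "inj_on f J" "f ` J \<subseteq> I"
  shows "indep_vars (\<lambda>j. M' (f j)) (\<lambda>j. X (f j)) J"
proof -
  from assms(1) have rv: "\<forall>i\<in>I. random_variable (M' i) (X i)"
    and ind: "indep_sets (\<lambda>i. {X i -` A \<inter> space M |A. A \<in> sets (M' i)}) I"
    unfolding indep_vars_def2 by auto
  show ?thesis unfolding indep_vars_def2
  proof (intro conjI ballI)
    fix j assume "j \<in> J" then show "random_variable (M' (f j)) (X (f j))" using rv assms(3) by auto
  next
    show "indep_sets (\<lambda>j. {X (f j) -` A \<inter> space M |A. A \<in> sets (M' (f j))}) J"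
    proof (rule indep_setsI)
      fix j assume "j \<in> J"
      then show "{X (f j) -` A \<inter> space M |A. A \<in> sets (M' (f j))} \<subseteq> events"
        using ind assms(3) unfolding indep_sets_def by auto
    next
      fix A K assume K: "K \<noteq> {}" "K \<subseteq> J" "finite K"
        and A: "\<forall>j\<in>K. A j \<in> {X (f j) -` B \<inter> space M |B. B \<in> sets (M' (f j))}"
      have injK: "inj_on f K" using assms(2) K(2) inj_on_subset by blast
      define B where "B i = A (the_inv_into K f i)" for i
      have BA: "B (f j) = A j" if "j \<in> K" for j unfolding B_def using the_inv_into_f_f[OF injK that] by simp
      have "prob (\<Inter>i\<in>f`K. B i) = (\<Prod>i\<in>f`K. prob (B i))"
      proof (rule indep_setsD[OF ind])
        show "f ` K \<subseteq> I" using K(2) assms(3) by auto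
        show "f ` K \<noteq> {}" using K(1) by simp
        show "finite (f ` K)" using K(3) by simp
        show "\<forall>i\<in>f ` K. B i \<in> {X i -` A \<inter> space M |A. A \<in> sets (M' i)}" using A BA by auto
      qed
      moreover have "(\<Inter>i\<in>f`K. B i) = (\<Inter>j\<in>K. A j)"
      proof -
        have "(\<Inter>i\<in>f`K. B i) = (\<Inter>j\<in>K. B (f j))" by (simp add: image_image)
        also have "\<dots> = (\<Inter>j\<in>K. A j)" by (intro INF_cong refl) (simp add: BA)
        finally show ?thesis .
      qed
      moreover have "(\<Prod>i\<in>f`K. prob (B i)) = (\<Prod>j\<in>K. prob (A j))"
        using prod.reindex[OF injK, of "\<lambda>i. prob (B i)"] BA by simp
      ultimately show "prob (\<Inter>j\<in>K. A j) = (\<Prod>j\<in>K. prob (A j))" by simp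
    qed
  qed
qed

theorem mainTheorem8:
  fixes M :: "'a measure" and d :: nat and \<beta> t :: "real vec"
    and eps :: "nat \<Rightarrow> real" and \<sigma> \<gamma> \<mu> :: real
    and g :: "nat \<Rightarrow> nat \<Rightarrow> 'a \<Rightarrow> real"
  assumes "prob_space M"
    and "d \<ge> 1"
    and "\<beta> \<in> carrier_vec (d+2)"
    and eps_pos: "\<And>j. j \<ge> 1 \<Longrightarrow> eps j > 0"
    and eps_dec: "\<And>i j. 1 \<le> i \<Longrightarrow> i < j \<Longrightarrow> eps j < eps i"
    and "\<sigma> > 0"
    and meas: "\<And>k j. k \<le> d \<Longrightarrow> j \<ge> 1 \<Longrightarrow> g k j \<in> borel_measurable M"
    and indep: "prob_space.indep_vars M (\<lambda>_. borel) (\<lambda>(k,j). g k j) ({..d} \<times> {1..})"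
    and ident: "\<And>k j. k \<le> d \<Longrightarrow> j \<ge> 1 \<Longrightarrow> distr M borel (g k j) = distr M borel (g 0 1)"
    and "integrable M (\<lambda>\<omega>. (g 0 1 \<omega>)^2)"
    and "prob_space.expectation M (g 0 1) = 0"
    and "prob_space.variance M (g 0 1) = 1"
    and "\<gamma> \<ge> 0" and "\<mu> \<ge> 0" and "max \<mu> (2*\<mu> - \<gamma>) < 1"
    and "(\<lambda>n. emp_var (regressor eps) n) \<in> \<Theta>(\<lambda>n. real n powr \<gamma>)"
    and "regressor eps \<in> O(\<lambda>n. real n powr (\<mu>/2))"
    and "t \<in> carrier_vec (d+2)" and "t \<noteq> 0\<^sub>v (d+2)"
  shows "weak_conv_m
    (\<lambda>n. distr M borel (\<lambda>\<omega>.
       (t \<bullet> (lse d \<beta> (regressor eps) (\<lambda>k j. \<sigma> * g k j \<omega>) n - \<beta>))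
       / (\<sigma> * sqrt (t \<bullet> (gram_inv d (regressor eps) n *\<^sub>v t)))))
    std_normal_distribution"
  proof -
  interpret P: prob_space M by fact
  note \<beta> = assms(3) and t = assms(18) and t0 = assms(19)
  obtain x where x_def: "x = regressor eps" by blast
  have xinc: "x i < x j" if "1 \<le> i" "i < j" for i j
    using eps_dec[OF that] eps_pos[of i] eps_pos[of j] that unfolding x_def regressor_def by simp
  have mono: "x i \<le> x j" if "1 \<le> i" "i \<le> j" for i j
    using xinc[of i j] that by (cases "i = j") auto
  have x12: "x 1 \<noteq> x 2" using xinc[of 1 2] by simp
  have \<sigma>: "\<sigma> \<noteq> 0" using \<open>\<sigma> > 0\<close> by simp
  have Om: "(\<lambda>n. emp_var x n) \<in> \<Omega>(\<lambda>n. real n powr \<gamma>)" using assms(16) unfolding x_def by blast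
  then obtain C1 where C1: "C1 > 0" "eventually (\<lambda>n. norm (emp_var x n) \<ge> C1 * norm (real n powr \<gamma>)) at_top"
    by (elim landau_omega.bigE) auto
  have Ox: "x \<in> O(\<lambda>n. real n powr (\<mu>/2))" using assms(17) unfolding x_def .
  then obtain C2 where C2: "C2 > 0" "eventually (\<lambda>n. norm (x n) \<le> C2 * norm (real n powr (\<mu>/2))) at_top"
    by (elim landau_o.bigE) auto
  define U where "U n = 2 / real n + (4*C2^2/C1) * real n powr (\<mu> - 1 - \<gamma>) + (4*(x 1)^2/C1) * real n powr (-(1+\<gamma>))" for n
  have \<mu>1: "\<mu> < 1" using assms(15) by simp
  have U0: "U \<longlonglongrightarrow> 0"
  proof -
    have a: "(\<lambda>n. 2 / real n) \<longlonglongrightarrow> 0"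
      by (intro tendsto_divide_0[OF tendsto_const] filterlim_at_top_imp_at_infinity filterlim_real_sequentially)
    have b: "(\<lambda>n. real n powr (\<mu> - 1 - \<gamma>)) \<longlonglongrightarrow> 0"
      using \<mu>1 \<open>\<gamma> \<ge> 0\<close> by (intro tendsto_neg_powr filterlim_real_sequentially) auto
    have c: "(\<lambda>n. real n powr (-(1+\<gamma>))) \<longlonglongrightarrow> 0"
      using \<open>\<gamma> \<ge> 0\<close> by (intro tendsto_neg_powr filterlim_real_sequentially) auto
    have "(\<lambda>n. 2 / real n + (4*C2^2/C1) * real n powr (\<mu> - 1 - \<gamma>) + (4*(x 1)^2/C1) * real n powr (-(1+\<gamma>)))
        \<longlonglongrightarrow> 0 + (4*C2^2/C1) * 0 + (4*(x 1)^2/C1) * 0"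
      by (intro tendsto_add tendsto_mult a b c tendsto_const)
    then show ?thesis unfolding U_def by simp
  qed
  define H where "H n = 2/n + 2*(x n - x 1)^2/(n * emp_var x n)" for n
  have HU: "eventually (\<lambda>n. emp_var x n > 0 \<and> H n \<le> U n) sequentially"
    using C1(2) C2(2) eventually_ge_at_top[of "1::nat"]
  proof eventually_elim
    case (elim n)
    have n: "real n > 0" using elim(3) by simp
    have pg: "real n powr \<gamma> > 0" using n by simp
    have V: "emp_var x n \<ge> C1 * real n powr \<gamma>" using elim(1) pg
      by (simp add: emp_var_def abs_of_nonneg sum_nonneg)
    have Vpos: "emp_var x n > 0" using V C1(1) pg by (smt (verit) mult_pos_pos)
    have xn: "\<bar>x n\<bar> \<le> C2 * real n powr (\<mu>/2)" using elim(2) by simp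
    have xn2: "(x n)^2 \<le> C2^2 * real n powr \<mu>"
    proof -
      have "\<bar>x n\<bar>^2 \<le> (C2 * real n powr (\<mu>/2))^2" by (rule power_mono[OF xn]) simp
      also have "\<dots> = C2^2 * (real n powr (\<mu>/2) * real n powr (\<mu>/2))"
        by (simp add: power2_eq_square)
      also have "real n powr (\<mu>/2) * real n powr (\<mu>/2) = real n powr \<mu>"
        by (simp flip: powr_add)
      finally show ?thesis by simp
    qed
    have D: "(x n - x 1)^2 \<le> 2 * C2^2 * real n powr \<mu> + 2 * (x 1)^2"
    proof -
      have "(x n - x 1)^2 \<le> 2 * (x n)^2 + 2 * (x 1)^2"
        using zero_le_power2[of "x n + x 1"] by (simp add: power2_eq_square algebra_simps)
      then show ?thesis using xn2 by linarith
    qed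
    have nV: "real n * emp_var x n \<ge> C1 * real n powr (1+\<gamma>)"
    proof -
      have "C1 * real n powr (1+\<gamma>) = real n * (C1 * real n powr \<gamma>)"
        using powr_mult_base[of "real n" \<gamma>] by simp
      also have "\<dots> \<le> real n * emp_var x n" using V n by (intro mult_left_mono) auto
      finally show ?thesis .
    qed
    have pg1: "real n powr (1+\<gamma>) > 0" using n by simp
    have "2*(x n - x 1)^2/(n * emp_var x n) \<le> 2*(2 * C2^2 * real n powr \<mu> + 2 * (x 1)^2) / (C1 * real n powr (1+\<gamma>))"
      using D nV C1(1) pg1 by (intro frac_le) auto
    also have "\<dots> = (4*C2^2/C1) * real n powr (\<mu> - 1 - \<gamma>) + (4*(x 1)^2/C1) * real n powr (-(1+\<gamma>))"
    proof -
      have e1: "real n powr (\<mu> - 1 - \<gamma>) = real n powr \<mu> / real n powr (1+\<gamma>)"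
        using powr_diff[of "real n" \<mu> "1+\<gamma>"] by (simp add: algebra_simps)
      have e2: "real n powr (-(1+\<gamma>)) = 1 / real n powr (1+\<gamma>)" by (rule powr_minus_divide)
      show ?thesis unfolding e1 e2 using C1(1) pg1 by (simp add: field_simps)
    qed
    finally show ?case using Vpos unfolding H_def U_def by simp
  qed
  define w where "w n = design_mat d x n *\<^sub>v (transpose_mat (gram_inv d x n) *\<^sub>v t)" for n
  define cc where "cc n r = w n $ r / sqrt (w n \<bullet> w n)" for n r
  define Y where "Y r = g (obs_k d r) (obs_j d r)" for r
  have wfacts: "w n \<bullet> w n > 0" "dim_vec (w n) = n*(d+1)" if "n \<ge> 2" for n
    using stat_repr(2,3)[OF that x12 \<beta> t t0 \<sigma>] unfolding w_def by auto
  have sumsq: "eventually (\<lambda>n. (\<Sum>i<n*(d+1). (cc n i)^2) = 1) sequentially"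
    using eventually_ge_at_top[of "2::nat"]
  proof eventually_elim
    case (elim n)
    have "(\<Sum>i<n*(d+1). (cc n i)^2) = (\<Sum>i<n*(d+1). (w n $ i)^2) / (w n \<bullet> w n)"
      unfolding cc_def using wfacts[OF elim]
      by (simp add: power_divide sum_divide_distrib)
    also have "(\<Sum>i<n*(d+1). (w n $ i)^2) = w n \<bullet> w n"
      using self_scalar_sum[of "w n"] wfacts[OF elim] by simp
    finally show ?case using wfacts[OF elim] by simp
  qed
  have small: "eventually (\<lambda>n. \<forall>i<n*(d+1). \<bar>cc n i\<bar> \<le> e) sequentially" if e: "e > 0" for e
  proof -
    have "eventually (\<lambda>n. U n < e^2) sequentially"
      using order_tendstoD(2)[OF U0, of "e^2"] e by simp
    then show ?thesis using HU eventually_ge_at_top[of "2::nat"]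
    proof eventually_elim
      case (elim n)
      show ?case
      proof (intro allI impI)
        fix r assume r: "r < n*(d+1)"
        have G: "gram_inv d x n \<in> carrier_mat (d+2) (d+2)" using gram_inverse(1)[OF elim(3) x12] .
        have v: "transpose_mat (gram_inv d x n) *\<^sub>v t \<in> carrier_vec (d+2)" using G t by simp
        have lev: "(w n $ r)^2 \<le> H n * (\<Sum>r'<n*(d+1). (w n $ r')^2)"
          unfolding w_def H_def using leverage[OF _ mono _ v r] elim by auto
        have S: "(\<Sum>r'<n*(d+1). (w n $ r')^2) = w n \<bullet> w n"
          using self_scalar_sum[of "w n"] wfacts[OF elim(3)] by simp
        have pos: "w n \<bullet> w n > 0" using wfacts[OF elim(3)] by simp
        have "(cc n r)^2 = (w n $ r)^2 / (w n \<bullet> w n)"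
          unfolding cc_def using pos by (simp add: power_divide)
        also have "\<dots> \<le> H n" using lev S pos by (simp add: divide_le_eq)
        also have "\<dots> \<le> U n" using elim(2) by simp
        also have "\<dots> < e^2" using elim(1) .
        finally have "(cc n r)^2 < e^2" .
        then show "\<bar>cc n r\<bar> \<le> e" using e by (simp add: abs_le_square_iff less_imp_le power2_abs
              abs_square_less_1 power_less_imp_less_base[of "\<bar>cc n r\<bar>" 2 e])
      qed
    qed
  qed
  have g01[measurable]: "g 0 1 \<in> borel_measurable M" using meas[of 0 1] by simp
  have indY: "P.indep_vars (\<lambda>_. borel) Y UNIV"
  proof -
    have "P.indep_vars (\<lambda>j. (\<lambda>_. borel) ((\<lambda>r. (obs_k d r, obs_j d r)) j))
        (\<lambda>j. (\<lambda>(k,j). g k j) ((\<lambda>r. (obs_k d r, obs_j d r)) j)) UNIV"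
    proof (rule P.indep_vars_reindex[OF indep])
      show "inj_on (\<lambda>r. (obs_k d r, obs_j d r)) UNIV" using obs_inj by simp
      show "range (\<lambda>r. (obs_k d r, obs_j d r)) \<subseteq> {..d} \<times> {1..}"
        using obs_k_le obs_j_ge by auto
    qed
    then show ?thesis unfolding Y_def by simp
  qed
  define \<nu> where "\<nu> = distr M borel (g 0 1)"
  have Ydistr: "distr M borel (Y i) = \<nu>" for i
    unfolding Y_def \<nu>_def using ident[OF obs_k_le obs_j_ge] .
  have int2: "integrable M (\<lambda>\<omega>. (g 0 1 \<omega>)^2)" by fact
  have int1: "integrable M (g 0 1)" by (rule P.square_integrable_imp_integrable[OF g01 int2])
  have E0: "P.expectation (g 0 1) = 0" by fact
  have Var: "P.variance (g 0 1) = 1" by fact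
  have clt: "weak_conv_m (\<lambda>n. distr M borel (\<lambda>\<omega>. \<Sum>i<n*(d+1). cc n i * Y i \<omega>)) std_normal_distribution"
  proof (rule P.weighted_clt[OF indY Ydistr _ _ _ _ sumsq small])
    show "integrable \<nu> (\<lambda>x. x)" unfolding \<nu>_def using int1 by (subst integrable_distr_eq[OF g01]) auto
    show "integrable \<nu> (\<lambda>x. x^2)" unfolding \<nu>_def using int2 by (subst integrable_distr_eq[OF g01]) auto
    show "integral\<^sup>L \<nu> (\<lambda>x. x) = 0" unfolding \<nu>_def using E0 by (subst integral_distr[OF g01]) auto
    show "integral\<^sup>L \<nu> (\<lambda>x. x^2) = 1" unfolding \<nu>_def using Var E0 by (subst integral_distr[OF g01]) auto
  qed
  have eq: "eventually (\<lambda>n. (\<lambda>\<omega>. (t \<bullet> (lse d \<beta> x (\<lambda>k j. \<sigma> * g k j \<omega>) n - \<beta>))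
       / (\<sigma> * sqrt (t \<bullet> (gram_inv d x n *\<^sub>v t)))) = (\<lambda>\<omega>. \<Sum>i<n*(d+1). cc n i * Y i \<omega>)) sequentially"
    using eventually_ge_at_top[of "2::nat"]
  proof eventually_elim
    case (elim n)
    show ?case
    proof
      fix \<omega>
      show "(t \<bullet> (lse d \<beta> x (\<lambda>k j. \<sigma> * g k j \<omega>) n - \<beta>)) / (\<sigma> * sqrt (t \<bullet> (gram_inv d x n *\<^sub>v t)))
          = (\<Sum>i<n*(d+1). cc n i * Y i \<omega>)"
        using stat_repr(4)[OF elim x12 \<beta> t t0 \<sigma>, of "\<lambda>k j. g k j \<omega>"]
        unfolding cc_def Y_def w_def by simp
    qed
  qed
  show ?thesis
    unfolding x_def[symmetric] weak_conv_m_def weak_conv_def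
  proof (intro allI impI)
    fix z assume z: "isCont (cdf std_normal_distribution) z"
    with clt have L: "(\<lambda>n. cdf (distr M borel (\<lambda>\<omega>. \<Sum>i<n*(d+1). cc n i * Y i \<omega>)) z) \<longlonglongrightarrow> cdf std_normal_distribution z"
      unfolding weak_conv_m_def weak_conv_def by blast
    show "(\<lambda>n. cdf (distr M borel (\<lambda>\<omega>. (t \<bullet> (lse d \<beta> x (\<lambda>k j. \<sigma> * g k j \<omega>) n - \<beta>))
       / (\<sigma> * sqrt (t \<bullet> (gram_inv d x n *\<^sub>v t))))) z) \<longlonglongrightarrow> cdf std_normal_distribution z"
      by (rule tendsto_cong[THEN iffD2, OF _ L]) (use eq in \<open>auto elim!: eventually_mono\<close>)
  qed
qed


end
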